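(* Let $f:\mathbb{R}^\ell\times\mathbb{R}^m\to\mathbb{R}^\ell$ be $C^1$, let $\Lambda$ be a parameter shift with limits $\lambda_\pm$, and let $X$ define a stable path. Let $N\in\mathbb{N}$ be such that $\|[D_xf(X(s),\Lambda(s))]^n\|<\frac14$ for all $s\in\mathbb{R}$ and $n\ge N$. Then for all sufficiently small $\epsilon>0$ and, for each such $\epsilon$, all sufficiently small $r>0$, we have $F_r^n(\mathcal{N}_\epsilon)\subset\mathcal{N}_\epsilon$ for every $n\in\{N,N+1,\ldots,N(N+1)\}$.
   Context: A parameter shift is a $C^1$ function $\Lambda:\mathbb{R}\to\mathbb{R}^m$ with $\lim_{s\to\pm\infty}\Lambda(s)=\lambda_\pm$ and $\lim_{s\to\pm\infty}\Lambda'(s)=0$. A stable path is given by $X:\mathbb{R}\to\mathbb{R}^\ell$ such that: $X(s)$ is a fixed point of $f(\cdot,\Lambda(s))$ for every $s$; $\{(s,X(s))\}$ is a connected curve; the limits $X_\pm=\lim_{s\to\pm\infty}X(s)$ exist and are fixed points of $f(\cdot,\lambda_\pm)$; and the spectral radius of $D_xf(X(s),\Lambda(s))$ is $<1$ for all $s\in\mathbb{R}\cup\{\pm\infty\}$. For $r\ge0$, $F_r(s,x)=(s+r,f(x,\Lambda(s)))$ and $F_r^n$ is its $n$-fold composition. $\mathcal{N}_\epsilon=\{(s,x):s\in\mathbb{R},\ \|x-X(s)\|\le\epsilon\}$ (Euclidean norm; matrix norms induced). *)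

theory Defs
  imports "HOL-Analysis.Analysis"
begin

definition C1_field ::
  "(real^'l \<Rightarrow> real^'m \<Rightarrow> real^'l) \<Rightarrow> ((real^'l) \<times> (real^'m) \<Rightarrow> (((real^'l) \<times> (real^'m)) \<Rightarrow>\<^sub>L (real^'l))) \<Rightarrow> bool" where
  "C1_field f f' \<longleftrightarrow>
     (\<forall>p. ((\<lambda>q. f (fst q) (snd q)) has_derivative blinfun_apply (f' p)) (at p))
     \<and> continuous_on UNIV f'"

definition Dx ::
  "((real^'l) \<times> (real^'m) \<Rightarrow> (((real^'l) \<times> (real^'m)) \<Rightarrow>\<^sub>L (real^'l))) \<Rightarrow> real^'l \<Rightarrow> real^'m \<Rightarrow> real^'l \<Rightarrow> real^'l" where
  "Dx f' x lam = (\<lambda>v. blinfun_apply (f' (x, lam)) (v, 0))"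

definition spectral_radius :: "real^'n^'n \<Rightarrow> real" where
  "spectral_radius A =
     Max {cmod z | z. det ((mat z :: complex^'n^'n) - (\<chi> i j. complex_of_real (A $ i $ j))) = 0}"

definition parameter_shift ::
  "(real \<Rightarrow> real^'m) \<Rightarrow> (real \<Rightarrow> real^'m) \<Rightarrow> real^'m \<Rightarrow> real^'m \<Rightarrow> bool" where
  "parameter_shift Lam Lam' lm lp \<longleftrightarrow>
     (\<forall>s. (Lam has_vector_derivative Lam' s) (at s)) \<and> continuous_on UNIV Lam'
     \<and> (Lam \<longlongrightarrow> lm) at_bot \<and> (Lam \<longlongrightarrow> lp) at_top
     \<and> (Lam' \<longlongrightarrow> 0) at_bot \<and> (Lam' \<longlongrightarrow> 0) at_top"

definition stable_path ::
  "(real^'l \<Rightarrow> real^'m \<Rightarrow> real^'l) \<Rightarrow> ((real^'l) \<times> (real^'m) \<Rightarrow> (((real^'l) \<times> (real^'m)) \<Rightarrow>\<^sub>L (real^'l)))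
   \<Rightarrow> (real \<Rightarrow> real^'m) \<Rightarrow> real^'m \<Rightarrow> real^'m \<Rightarrow> (real \<Rightarrow> real^'l) \<Rightarrow> bool" where
  "stable_path f f' Lam lm lp X \<longleftrightarrow>
     (\<forall>s. f (X s) (Lam s) = X s)
     \<and> connected {(s, X s) | s. True}
     \<and> (\<exists>Xm Xp. (X \<longlongrightarrow> Xm) at_bot \<and> (X \<longlongrightarrow> Xp) at_top
          \<and> f Xm lm = Xm \<and> f Xp lp = Xp
          \<and> spectral_radius (matrix (Dx f' Xm lm)) < 1
          \<and> spectral_radius (matrix (Dx f' Xp lp)) < 1)
     \<and> (\<forall>s. spectral_radius (matrix (Dx f' (X s) (Lam s))) < 1)"

definition F_map :: "(real^'l \<Rightarrow> real^'m \<Rightarrow> real^'l) \<Rightarrow> (real \<Rightarrow> real^'m) \<Rightarrow> real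
   \<Rightarrow> real \<times> (real^'l) \<Rightarrow> real \<times> (real^'l)" where
  "F_map f Lam r = (\<lambda>(s, x). (s + r, f x (Lam s)))"

definition nbhd_path :: "(real \<Rightarrow> real^'l) \<Rightarrow> real \<Rightarrow> (real \<times> (real^'l)) set" where
  "nbhd_path X \<epsilon> = {(s, x). norm (x - X s) \<le> \<epsilon>}"

end

theory Submission
  imports Defs
begin

lemma lim_ucont:
  fixes g :: "real \<Rightarrow> 'a::real_normed_vector"
  assumes c: "continuous_on UNIV g" and ta: "(g \<longlongrightarrow> a) at_top" and tb: "(g \<longlongrightarrow> b) at_bot"
  shows "uniformly_continuous_on UNIV g"
  unfolding uniformly_continuous_on_def
proof (intro allI impI)
  fix e :: real assume e: "e > 0"
  have "\<forall>\<^sub>F s in at_top. dist (g s) a < e/2" using tendstoD[OF ta, of "e/2"] e by simp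
  then obtain T where T: "\<And>s. s \<ge> T \<Longrightarrow> dist (g s) a < e/2" by (auto simp: eventually_at_top_linorder)
  have "\<forall>\<^sub>F s in at_bot. dist (g s) b < e/2" using tendstoD[OF tb, of "e/2"] e by simp
  then obtain T' where T': "\<And>s. s \<le> T' \<Longrightarrow> dist (g s) b < e/2" by (auto simp: eventually_at_bot_linorder)
  have "uniformly_continuous_on {T'-1..T+1} g"
    using compact_uniformly_continuous[OF continuous_on_subset[OF c] compact_Icc] by blast
  then obtain d0 where d0: "d0 > 0" "\<And>x x'. x \<in> {T'-1..T+1} \<Longrightarrow> x' \<in> {T'-1..T+1} \<Longrightarrow> dist x' x < d0 \<Longrightarrow> dist (g x') (g x) < e"
    unfolding uniformly_continuous_on_def using e by metis
  show "\<exists>d>0. \<forall>x\<in>UNIV. \<forall>x'\<in>UNIV. dist x' x < d \<longrightarrow> dist (g x') (g x) < e"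
  proof (intro exI[of _ "min d0 1"] conjI ballI impI)
    show "min d0 1 > 0" using d0 by simp
    fix x x' :: real assume d: "dist x' x < min d0 1"
    show "dist (g x') (g x) < e"
    proof (cases "x \<in> {T'-1..T+1} \<and> x' \<in> {T'-1..T+1}")
      case True then show ?thesis using d0 d by auto
    next
      case False
      then have "(x \<ge> T \<and> x' \<ge> T) \<or> (x \<le> T' \<and> x' \<le> T')" using d by (auto simp: dist_real_def)
      then show ?thesis
      proof
        assume "x \<ge> T \<and> x' \<ge> T"
        then have "dist (g x) a < e/2" "dist (g x') a < e/2" using T by auto
        then show ?thesis by (metis dist_commute dist_triangle_half_r)
      next
        assume "x \<le> T' \<and> x' \<le> T'"
        then have "dist (g x) b < e/2" "dist (g x') b < e/2" using T' by auto
        then show ?thesis by (metis dist_commute dist_triangle_half_r)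
      qed
    qed
  qed
qed

lemma lim_bounded:
  fixes g :: "real \<Rightarrow> 'a::real_normed_vector"
  assumes c: "continuous_on UNIV g" and ta: "(g \<longlongrightarrow> a) at_top" and tb: "(g \<longlongrightarrow> b) at_bot"
  shows "bounded (range g)"
proof -
  have "\<forall>\<^sub>F s in at_top. dist (g s) a < 1" using ta by (simp add: tendsto_iff)
  then obtain T where T: "\<And>s. s \<ge> T \<Longrightarrow> dist (g s) a < 1" by (auto simp: eventually_at_top_linorder)
  have "\<forall>\<^sub>F s in at_bot. dist (g s) b < 1" using tb by (simp add: tendsto_iff)
  then obtain T' where T': "\<And>s. s \<le> T' \<Longrightarrow> dist (g s) b < 1" by (auto simp: eventually_at_bot_linorder)
  have "range g \<subseteq> g ` {T'..T} \<union> ball a 1 \<union> ball b 1"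
  proof
    fix y assume "y \<in> range g" then obtain s where s: "y = g s" by auto
    show "y \<in> g ` {T'..T} \<union> ball a 1 \<union> ball b 1"
      using T[of s] T'[of s] s by (cases "s \<ge> T"; cases "s \<le> T'") (auto simp: dist_commute)
  qed
  moreover have "bounded (g ` {T'..T})"
    using compact_continuous_image[OF continuous_on_subset[OF c] compact_Icc] compact_imp_bounded by blast
  ultimately show ?thesis by (meson bounded_Un bounded_ball bounded_subset)
qed

lemma graph_sep:
  fixes X :: "real \<Rightarrow> 'a::real_normed_vector"
  assumes conn: "connected {(s, X s) | s. True}" and a: "a > 0" and B: "B > 0"
    and dich: "\<And>s. \<bar>s - s0\<bar> < a \<Longrightarrow> norm (X s - X s0) < B \<Longrightarrow> norm (X s - X s0) < B/2"
    and t: "\<bar>t - s0\<bar> < a"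
  shows "norm (X t - X s0) < B"
proof (rule ccontr)
  assume nt: "\<not> norm (X t - X s0) < B"
  let ?G = "{(s, X s) | s. True}"
  have oc: "open {z::real\<times>'a. g z < h z}" if "continuous_on UNIV g" "continuous_on UNIV h" for g h :: "real\<times>'a \<Rightarrow> real"
    using open_Collect_less that by blast
  have o1: "open {z::real\<times>'a. fst z < c}" for c by (rule oc) (intro continuous_intros)+
  have o2: "open {z::real\<times>'a. c < fst z}" for c by (rule oc) (intro continuous_intros)+
  have o3: "open {z::real\<times>'a. norm (snd z - X s0) < c}" for c by (rule oc) (intro continuous_intros)+
  have o4: "open {z::real\<times>'a. c < norm (snd z - X s0)}" for c by (rule oc) (intro continuous_intros)+
  consider "t > s0" | "t < s0" | "t = s0" by linarith
  then show False
  proof cases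
    case 1
    define O1 where "O1 = {z::real\<times>'a. fst z < s0} \<union> ({z. s0 - a < fst z} \<inter> {z. fst z < t} \<inter> {z. norm (snd z - X s0) < B})"
    define O2 where "O2 = {z::real\<times>'a. t < fst z} \<union> ({z. s0 < fst z} \<inter> {z. fst z < s0 + a} \<inter> {z. B/2 < norm (snd z - X s0)})"
    have "open O1" unfolding O1_def by (intro open_Un open_Int o1 o2 o3)
    moreover have "open O2" unfolding O2_def by (intro open_Un open_Int o1 o2 o4)
    moreover have "O1 \<inter> O2 \<inter> ?G = {}"
    proof -
      { fix s assume "(s, X s) \<in> O1" "(s, X s) \<in> O2"
        then have False using dich[of s] 1 t unfolding O1_def O2_def by auto }
      then show ?thesis by auto
    qed
    moreover have "?G \<subseteq> O1 \<union> O2"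
    proof -
      { fix s
        have "(s, X s) \<in> O1 \<union> O2"
        proof (cases "s < s0 \<or> s > t")
          case True then show ?thesis unfolding O1_def O2_def by auto
        next
          case False
          then have sa: "\<bar>s - s0\<bar> < a" using t 1 by auto
          show ?thesis
          proof (cases "norm (X s - X s0) < B")
            case True
            then have "s \<noteq> t" using nt by auto
            then show ?thesis using False sa True unfolding O1_def by auto
          next
            case nB: False
            then have "s \<noteq> s0" using B by auto
            then show ?thesis using False sa nB B unfolding O2_def by auto
          qed
        qed }
      then show ?thesis by auto
    qed
    ultimately have "O1 \<inter> ?G = {} \<or> O2 \<inter> ?G = {}" using connectedD[OF conn] by blast
    moreover have "(s0, X s0) \<in> O1 \<inter> ?G" using a 1 B unfolding O1_def by auto
    moreover have "(t, X t) \<in> O2 \<inter> ?G" using t 1 nt B unfolding O2_def by auto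
    ultimately show False by blast
  next
    case 2
    define O1 where "O1 = {z::real\<times>'a. s0 < fst z} \<union> ({z. fst z < s0 + a} \<inter> {z. t < fst z} \<inter> {z. norm (snd z - X s0) < B})"
    define O2 where "O2 = {z::real\<times>'a. fst z < t} \<union> ({z. fst z < s0} \<inter> {z. s0 - a < fst z} \<inter> {z. B/2 < norm (snd z - X s0)})"
    have "open O1" unfolding O1_def by (intro open_Un open_Int o1 o2 o3)
    moreover have "open O2" unfolding O2_def by (intro open_Un open_Int o1 o2 o4)
    moreover have "O1 \<inter> O2 \<inter> ?G = {}"
    proof -
      { fix s assume "(s, X s) \<in> O1" "(s, X s) \<in> O2"
        then have False using dich[of s] 2 t unfolding O1_def O2_def by auto }
      then show ?thesis by auto
    qed
    moreover have "?G \<subseteq> O1 \<union> O2"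
    proof -
      { fix s
        have "(s, X s) \<in> O1 \<union> O2"
        proof (cases "s > s0 \<or> s < t")
          case True then show ?thesis unfolding O1_def O2_def by auto
        next
          case False
          then have sa: "\<bar>s - s0\<bar> < a" using t 2 by auto
          show ?thesis
          proof (cases "norm (X s - X s0) < B")
            case True
            then have "s \<noteq> t" using nt by auto
            then show ?thesis using False sa True unfolding O1_def by auto
          next
            case nB: False
            then have "s \<noteq> s0" using B by auto
            then show ?thesis using False sa nB B unfolding O2_def by auto
          qed
        qed }
      then show ?thesis by auto
    qed
    ultimately have "O1 \<inter> ?G = {} \<or> O2 \<inter> ?G = {}" using connectedD[OF conn] by blast
    moreover have "(s0, X s0) \<in> O1 \<inter> ?G" using a 2 B unfolding O1_def by auto
    moreover have "(t, X t) \<in> O2 \<inter> ?G" using t 2 nt B unfolding O2_def by auto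
    ultimately show False by blast
  next
    case 3 then show False using nt B by simp
  qed
qed

lemma bl_pow: "bounded_linear (T::'a::real_normed_vector \<Rightarrow> 'a) \<Longrightarrow> bounded_linear (T ^^ k)"
  by (induction k) (auto intro: bounded_linear_ident bounded_linear_compose simp: comp_def)

lemma pow_bound:
  fixes T :: "'a::real_normed_vector \<Rightarrow> 'a"
  assumes "\<And>v. norm (T v) \<le> M * norm v" "M \<ge> 0"
  shows "norm ((T ^^ k) v) \<le> M ^ k * norm v"
proof (induction k)
  case 0 then show ?case by simp
next
  case (Suc k)
  have "norm ((T ^^ Suc k) v) = norm (T ((T ^^ k) v))" by simp
  also have "\<dots> \<le> M * norm ((T ^^ k) v)" using assms(1) by blast
  also have "\<dots> \<le> M * (M ^ k * norm v)" using Suc assms(2) by (simp add: mult_left_mono)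
  finally show ?case by simp
qed

lemma Dx_bl: "bounded_linear (Dx f' x lam)"
  unfolding Dx_def
  by (rule bounded_linear_compose[OF blinfun.bounded_linear_right])
     (intro bounded_linear_Pair bounded_linear_ident bounded_linear_zero)

lemma Dx_bound: "norm (Dx f' x lam v) \<le> norm (f' (x, lam)) * norm v"
  unfolding Dx_def using norm_blinfun[of "f' (x, lam)" "(v, 0)"] by (simp add: norm_Pair)

lemma telescope_pow:
  fixes T :: "'a::real_normed_vector \<Rightarrow> 'a"
  assumes T: "bounded_linear T"
  shows "v - (T ^^ n) v = (\<Sum>k<n. (T ^^ k) (v - T v))"
proof (induction n)
  case 0 then show ?case by simp
next
  case (Suc n)
  interpret L: bounded_linear "T ^^ n" using bl_pow[OF T] .
  have "v - (T ^^ Suc n) v = (v - (T ^^ n) v) + ((T ^^ n) v - (T ^^ n) (T v))"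
    by (simp add: funpow_swap1)
  also have "(T ^^ n) v - (T ^^ n) (T v) = (T ^^ n) (v - T v)" by (simp add: L.diff)
  finally show ?case using Suc by simp
qed

lemma lower_bound:
  fixes T :: "'a::real_normed_vector \<Rightarrow> 'a"
  assumes T: "bounded_linear T" and N: "N \<ge> 1" and on: "onorm (T ^^ N) < 1/4"
    and Mb: "\<And>v. norm (T v) \<le> M * norm v" and M: "M \<ge> 0"
  shows "\<exists>c>0. \<forall>v. c * norm v \<le> norm (v - T v)"
proof -
  define S where "S = (\<Sum>k<N. M ^ k)"
  have "S \<ge> (\<Sum>k<1. M ^ k)" unfolding S_def using N M
    by (intro sum_mono2) auto
  then have S1: "S \<ge> 1" by simp
  show ?thesis
  proof (intro exI[of _ "3 / (4 * S)"] conjI allI)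
    show "3 / (4 * S) > 0" using S1 by simp
    fix v
    have "norm ((T ^^ N) v) \<le> onorm (T ^^ N) * norm v" using onorm[OF bl_pow[OF T]] by blast
    also have "\<dots> \<le> 1/4 * norm v" using on by (intro mult_right_mono) auto
    finally have a1: "norm ((T ^^ N) v) \<le> 1/4 * norm v" .
    have "norm v - norm ((T ^^ N) v) \<le> norm (v - (T ^^ N) v)" by (rule norm_triangle_ineq2)
    also have "\<dots> = norm (\<Sum>k<N. (T ^^ k) (v - T v))" using telescope_pow[OF T] by simp
    also have "\<dots> \<le> (\<Sum>k<N. norm ((T ^^ k) (v - T v)))" by (rule norm_sum)
    also have "\<dots> \<le> (\<Sum>k<N. M ^ k * norm (v - T v))" by (intro sum_mono pow_bound Mb M)
    also have "\<dots> = S * norm (v - T v)" unfolding S_def by (simp add: sum_distrib_right)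
    finally have "3/4 * norm v \<le> S * norm (v - T v)" using a1 by linarith
    then show "3 / (4 * S) * norm v \<le> norm (v - T v)" using S1
      by (simp add: field_simps)
  qed
qed

lemma X_cont:
  fixes f :: "real^'l \<Rightarrow> real^'m \<Rightarrow> real^'l"
    and f' :: "(real^'l) \<times> (real^'m) \<Rightarrow> (((real^'l) \<times> (real^'m)) \<Rightarrow>\<^sub>L (real^'l))"
    and Lam :: "real \<Rightarrow> real^'m" and X :: "real \<Rightarrow> real^'l"
  assumes C1: "C1_field f f'" and fx: "\<And>s. f (X s) (Lam s) = X s"
    and conn: "connected {(s, X s) | s. True}"
    and cL: "continuous_on UNIV Lam" and N: "N \<ge> 1"
    and on: "\<And>s. onorm ((Dx f' (X s) (Lam s)) ^^ N) < 1/4"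
  shows "continuous_on UNIV X"
proof (rule continuous_at_imp_continuous_on, rule ballI)
  fix s0 :: real
  define X0 where "X0 = X s0"
  define L0 where "L0 = Lam s0"
  define p0 where "p0 = (X0, L0)"
  define T where "T = Dx f' X0 L0"
  define M0 where "M0 = norm (f' p0)"
  have M0: "M0 \<ge> 0" unfolding M0_def by simp
  obtain c where c: "c > 0" "\<And>v. c * norm v \<le> norm (v - T v)"
    using lower_bound[OF Dx_bl N, of f' X0 L0 M0] on[of s0] Dx_bound[of f' X0 L0] M0
    unfolding T_def X0_def L0_def M0_def p0_def by blast
  have hd: "((\<lambda>q. f (fst q) (snd q)) has_derivative blinfun_apply (f' p0)) (at p0)"
    using C1 unfolding C1_field_def by blast
  obtain d where d: "d > 0" "\<And>q. norm (q - p0) < d \<Longrightarrow>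
      norm (f (fst q) (snd q) - f (fst p0) (snd p0) - blinfun_apply (f' p0) (q - p0)) \<le> c/2 * norm (q - p0)"
    using hd c(1) unfolding has_derivative_at_alt by (metis half_gt_zero)
  define K0 where "K0 = (2 * M0 + c) / c"
  have K0: "K0 > 0" unfolding K0_def using c M0 by simp
  have key: "norm (X s - X0) \<le> K0 * norm (Lam s - L0)"
    if h1: "norm (X s - X0) < d/2" and h2: "norm (Lam s - L0) < d/2" for s
  proof -
    define u where "u = X s - X0"
    define w where "w = Lam s - L0"
    have qp: "(X s, Lam s) - p0 = (u, w)" unfolding p0_def u_def w_def by simp
    have "norm (u, w) \<le> norm u + norm w" by (rule norm_Pair_le)
    then have nq: "norm ((X s, Lam s) - p0) < d" using h1 h2 qp unfolding u_def w_def by simp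
    have fq: "f (fst (X s, Lam s)) (snd (X s, Lam s)) = X s" using fx by simp
    have fp: "f (fst p0) (snd p0) = X0" unfolding p0_def X0_def L0_def using fx by simp
    have e1: "norm (u - blinfun_apply (f' p0) (u, w)) \<le> c/2 * (norm u + norm w)"
    proof -
      have "norm (u - blinfun_apply (f' p0) (u, w)) \<le> c/2 * norm (u, w)"
        using d(2)[OF nq] unfolding fq fp qp u_def by simp
      also have "\<dots> \<le> c/2 * (norm u + norm w)" using c(1) norm_Pair_le[of u w]
        by (intro mult_left_mono) auto
      finally show ?thesis .
    qed
    have e2: "blinfun_apply (f' p0) (u, w) = T u + blinfun_apply (f' p0) (0, w)"
    proof -
      have "(u, w) = (u, 0) + (0, w)" by simp
      then have "blinfun_apply (f' p0) (u, w) = blinfun_apply (f' p0) (u, 0) + blinfun_apply (f' p0) (0, w)"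
        by (metis blinfun.add_right)
      then show ?thesis unfolding T_def Dx_def p0_def by simp
    qed
    have e3: "norm (blinfun_apply (f' p0) (0, w)) \<le> M0 * norm w"
      using norm_blinfun[of "f' p0" "(0, w)"] unfolding M0_def by (simp add: norm_Pair)
    have "c * norm u \<le> norm (u - T u)" by (rule c(2))
    also have "u - T u = (u - blinfun_apply (f' p0) (u, w)) + blinfun_apply (f' p0) (0, w)"
      using e2 by simp
    also have "norm \<dots> \<le> norm (u - blinfun_apply (f' p0) (u, w)) + norm (blinfun_apply (f' p0) (0, w))"
      by (rule norm_triangle_ineq)
    finally have F: "c * norm u \<le> c/2 * (norm u + norm w) + M0 * norm w" using e1 e3 by linarith
    have eq: "(2 * M0 + c) * norm w - c * norm u = 2 * (c/2 * (norm u + norm w) + M0 * norm w - c * norm u)"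
      by (simp add: algebra_simps)
    have G: "0 \<le> 2 * (c/2 * (norm u + norm w) + M0 * norm w - c * norm u)" using F by simp
    have "0 \<le> (2 * M0 + c) * norm w - c * norm u" using G by (simp only: eq)
    then have "c * norm u \<le> (2 * M0 + c) * norm w" by simp
    then have "norm u \<le> (2 * M0 + c) * norm w / c" using c(1) by (simp add: field_simps)
    then show ?thesis unfolding K0_def u_def w_def by simp
  qed
  show "isCont X s0"
    unfolding continuous_at_eps_delta
  proof (intro allI impI)
    fix e :: real assume e: "e > 0"
    define \<eta> where "\<eta> = min (d/2) (min (d/(4*(K0+1))) (e/(K0+1)))"
    have \<eta>: "\<eta> > 0" unfolding \<eta>_def using d e K0 by simp
    have "isCont Lam s0" using cL by (simp add: continuous_on_eq_continuous_at)
    then obtain a where a: "a > 0" "\<And>s. dist s s0 < a \<Longrightarrow> dist (Lam s) L0 < \<eta>"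
      unfolding continuous_at_eps_delta L0_def using \<eta> by metis
    have la: "norm (Lam s - L0) < \<eta>" if "\<bar>s - s0\<bar> < a" for s
      using a(2)[of s] that by (simp add: dist_norm dist_real_def)
    have dich: "norm (X s - X s0) < d/2/2" if "\<bar>s - s0\<bar> < a" "norm (X s - X s0) < d/2" for s
    proof -
      have ln: "norm (Lam s - L0) < d/2" using la[OF that(1)] unfolding \<eta>_def by simp
      have "norm (X s - X0) \<le> K0 * norm (Lam s - L0)" using key that(2) ln X0_def by simp
      also have "\<dots> \<le> K0 * (d/(4*(K0+1)))" using la[OF that(1)] K0 unfolding \<eta>_def
        by (intro mult_left_mono) auto
      also have "\<dots> < d/2/2" using K0 d by (simp add: field_simps)
      finally show ?thesis unfolding X0_def .
    qed
    have sep: "norm (X t - X s0) < d/2" if "\<bar>t - s0\<bar> < a" for t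
      using graph_sep[OF conn a(1) _ dich that] d by simp
    show "\<exists>\<delta>>0. \<forall>x'. dist x' s0 < \<delta> \<longrightarrow> dist (X x') (X s0) < e"
    proof (intro exI[of _ a] conjI allI impI)
      show "a > 0" by (rule a(1))
      fix s assume "dist s s0 < a"
      then have sa: "\<bar>s - s0\<bar> < a" by (simp add: dist_real_def)
      have ln: "norm (Lam s - L0) < d/2" using la[OF sa] unfolding \<eta>_def by simp
      have "norm (X s - X0) \<le> K0 * norm (Lam s - L0)" using key sep[OF sa] ln X0_def by simp
      also have "\<dots> \<le> K0 * (e/(K0+1))" using la[OF sa] K0 unfolding \<eta>_def
        by (intro mult_left_mono) auto
      also have "\<dots> < e" using K0 e by (simp add: field_simps)
      finally show "dist (X s) (X s0) < e" unfolding X0_def by (simp add: dist_norm)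
    qed
  qed
qed

lemma LIN:
  fixes f :: "real^'l \<Rightarrow> real^'m \<Rightarrow> real^'l"
    and f' :: "(real^'l) \<times> (real^'m) \<Rightarrow> (((real^'l) \<times> (real^'m)) \<Rightarrow>\<^sub>L (real^'l))"
  assumes C1: "C1_field f f'" and eta: "\<eta> > 0"
  shows "\<exists>\<delta>>0. \<delta> \<le> 1 \<and> (\<forall>p\<in>cball 0 R. \<forall>q. norm (q - p) < \<delta> \<longrightarrow>
     norm (f (fst q) (snd q) - f (fst p) (snd p) - blinfun_apply (f' p) (q - p)) \<le> \<eta> * norm (q - p))"
proof -
  have hd: "\<And>p. ((\<lambda>q. f (fst q) (snd q)) has_derivative blinfun_apply (f' p)) (at p)"
    and cf: "continuous_on UNIV f'" using C1 unfolding C1_field_def by auto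
  have "uniformly_continuous_on (cball 0 (R+1)) f'"
    by (rule compact_uniformly_continuous[OF continuous_on_subset[OF cf] compact_cball]) simp
  then obtain d1 where d1: "d1 > 0" "\<And>x x'. x \<in> cball 0 (R+1) \<Longrightarrow> x' \<in> cball 0 (R+1) \<Longrightarrow> dist x' x < d1 \<Longrightarrow> dist (f' x') (f' x) < \<eta>"
    unfolding uniformly_continuous_on_def using eta by metis
  show ?thesis
  proof (intro exI[of _ "min d1 1"] conjI ballI allI impI)
    show "min d1 1 > 0" using d1 by simp
    show "min d1 1 \<le> 1" by simp
    fix p q assume p: "p \<in> cball (0::(real^'l) \<times> (real^'m)) R" and q: "norm (q - p) < min d1 1"
    let ?S = "ball p (min d1 1)"
    have Ssub: "x \<in> cball 0 (R+1)" if "x \<in> ?S" for x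
    proof -
      have "norm x \<le> norm p + norm (x - p)" by (metis add_diff_cancel_left' norm_triangle_ineq diff_add_cancel add.commute)
      moreover have "norm (x - p) < 1" using that by (simp add: dist_norm norm_minus_commute)
      moreover have "norm p \<le> R" using p by simp
      ultimately show ?thesis by simp
    qed
    have "norm (f (fst q) (snd q) - f (fst p) (snd p) - blinfun_apply (f' p) (q - p)) \<le> norm (q - p) * \<eta>"
    proof (rule differentiable_bound_linearization[where S = ?S and f' = "\<lambda>x. blinfun_apply (f' x)"])
      fix t :: real assume t: "t \<in> {0..1}"
      have "norm (t *\<^sub>R (q - p)) \<le> norm (q - p)" using t by (simp add: mult_left_le_one_le)
      then show "p + t *\<^sub>R (q - p) \<in> ?S" using q by (simp add: dist_norm)
    next
      fix x assume "x \<in> ?S"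
      then show "((\<lambda>q. f (fst q) (snd q)) has_derivative blinfun_apply (f' x)) (at x within ?S)"
        using hd has_derivative_at_withinI by blast
    next
      fix x assume x: "x \<in> ?S"
      have "dist (f' x) (f' p) < \<eta>"
        using d1(2)[OF _ Ssub[OF x]] p x by (simp add: dist_commute)
      then show "onorm (blinfun_apply (f' x) - blinfun_apply (f' p)) \<le> \<eta>"
        by (auto simp: dist_norm norm_blinfun.rep_eq blinfun.diff_left[abs_def] fun_diff_def)
    next
      show "p \<in> ?S" using d1 by simp
    qed
    then show "norm (f (fst q) (snd q) - f (fst p) (snd p) - blinfun_apply (f' p) (q - p)) \<le> \<eta> * norm (q - p)"
      by (simp add: mult.commute)
  qed
qed

primrec trj :: "(real^'l \<Rightarrow> real^'m \<Rightarrow> real^'l) \<Rightarrow> (real \<Rightarrow> real^'m) \<Rightarrow> real \<Rightarrow> real \<Rightarrow> real^'l \<Rightarrow> nat \<Rightarrow> real^'l" where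
  "trj f Lam r s x 0 = x"
| "trj f Lam r s x (Suc k) = f (trj f Lam r s x k) (Lam (s + real k * r))"

lemma F_pow: "(F_map f Lam r ^^ k) (s, x) = (s + real k * r, trj f Lam r s x k)"
proof (induction k)
  case 0 then show ?case by simp
next
  case (Suc k)
  have "(F_map f Lam r ^^ Suc k) (s, x) = F_map f Lam r ((F_map f Lam r ^^ k) (s, x))" by simp
  also have "\<dots> = F_map f Lam r (s + real k * r, trj f Lam r s x k)" using Suc by simp
  also have "\<dots> = (s + real (Suc k) * r, trj f Lam r s x (Suc k))"
    by (simp add: F_map_def algebra_simps)
  finally show ?case .
qed

lemma EST:
  fixes f :: "real^'l \<Rightarrow> real^'m \<Rightarrow> real^'l"
    and f' :: "(real^'l) \<times> (real^'m) \<Rightarrow> (((real^'l) \<times> (real^'m)) \<Rightarrow>\<^sub>L (real^'l))"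
    and xs :: "nat \<Rightarrow> real^'l" and lams :: "nat \<Rightarrow> real^'m"
  assumes fp: "f X0 L0 = X0"
    and Mb: "norm (f' (X0, L0)) \<le> M" and M: "M \<ge> 0"
    and lin: "\<And>q. norm (q - (X0,L0)) < \<delta> \<Longrightarrow> norm (f (fst q) (snd q) - f X0 L0 - blinfun_apply (f' (X0,L0)) (q - (X0,L0))) \<le> \<eta> * norm (q - (X0,L0))"
    and eta: "0 \<le> \<eta>" "\<eta> \<le> 1"
    and x0: "xs 0 = x" "norm (x - X0) \<le> \<epsilon>"
    and step: "\<And>k. k < n \<Longrightarrow> xs (Suc k) = f (xs k) (lams k)"
    and lb: "\<And>k. k < n \<Longrightarrow> norm (lams k - L0) \<le> D"
    and D: "D \<ge> 0" and eps: "\<epsilon> \<ge> 0"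
    and pre: "(M+1)^n * \<epsilon> + real n * (2*(M+1))^n * (M*D + \<eta>*((M+1)^n*\<epsilon> + D)) + D < \<delta>"
  shows "norm (xs n - X0 - (Dx f' X0 L0 ^^ n) (x - X0)) \<le> real n * (2*(M+1))^n * (M*D + \<eta>*((M+1)^n*\<epsilon> + D))"
proof -
  define L where "L = M + 1"
  define \<gamma> where "\<gamma> = M*D + \<eta>*(L^n*\<epsilon> + D)"
  define A where "A = Dx f' X0 L0"
  define P where "P = real n * (2*L)^n"
  define e0 where "e0 = x - X0"
  have L1: "L \<ge> 1" unfolding L_def using M by simp
  have g0: "\<gamma> \<ge> 0" unfolding \<gamma>_def using M D eta eps L1 by simp
  interpret A: bounded_linear A unfolding A_def by (rule Dx_bl)
  have Ab: "norm (A v) \<le> M * norm v" for v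
    using Dx_bound[of f' X0 L0 v] Mb unfolding A_def by (meson mult_right_mono norm_ge_zero order_trans)
  have claim: "k \<le> n \<Longrightarrow> norm (xs k - X0 - (A ^^ k) e0) \<le> real k * (2*L)^k * \<gamma>" for k
  proof (induction k)
    case 0 then show ?case using x0 unfolding e0_def by simp
  next
    case (Suc k)
    then have kn: "k < n" by simp
    define e where "e = xs k - X0"
    define d where "d = e - (A ^^ k) e0"
    define \<Delta> where "\<Delta> = lams k - L0"
    have IH: "norm d \<le> real k * (2*L)^k * \<gamma>" using Suc kn unfolding d_def e_def by simp
    have hAk: "norm ((A ^^ k) e0) \<le> L^n * \<epsilon>"
    proof -
      have "norm ((A ^^ k) e0) \<le> M^k * norm e0" by (rule pow_bound[OF Ab M])
      also have "\<dots> \<le> M^k * \<epsilon>" using x0 M unfolding e0_def by (simp add: mult_left_mono)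
      also have "\<dots> \<le> L^k * \<epsilon>" using M eps unfolding L_def by (intro mult_right_mono power_mono) auto
      also have "\<dots> \<le> L^n * \<epsilon>" using L1 kn eps by (intro mult_right_mono power_increasing) auto
      finally show ?thesis .
    qed
    have hP: "real k * (2*L)^k * \<gamma> \<le> P * \<gamma>" unfolding P_def using kn L1 g0
      by (intro mult_right_mono mult_mono power_increasing) auto
    have he: "norm e \<le> L^n * \<epsilon> + norm d"
      using norm_triangle_ineq[of "(A ^^ k) e0" d] hAk unfolding d_def by simp
    have hD: "norm \<Delta> \<le> D" using lb[OF kn] unfolding \<Delta>_def .
    have qp: "(xs k, lams k) - (X0, L0) = (e, \<Delta>)" unfolding e_def \<Delta>_def by simp
    have nq: "norm (e, \<Delta>) \<le> norm e + D" using norm_Pair_le[of e \<Delta>] hD by simp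
    have "norm (e, \<Delta>) < \<delta>"
    proof -
      have "norm (e, \<Delta>) \<le> L^n * \<epsilon> + P * \<gamma> + D" using nq he IH hP by simp
      then show ?thesis using pre unfolding L_def P_def \<gamma>_def by simp
    qed
    then have l1: "norm (xs (Suc k) - X0 - blinfun_apply (f' (X0,L0)) (e, \<Delta>)) \<le> \<eta> * norm (e, \<Delta>)"
      using lin[of "(xs k, lams k)"] unfolding qp step[OF kn] fp by simp
    have l1': "norm (xs (Suc k) - X0 - blinfun_apply (f' (X0,L0)) (e, \<Delta>)) \<le> \<eta> * (L^n * \<epsilon> + norm d + D)"
    proof -
      have "\<eta> * norm (e, \<Delta>) \<le> \<eta> * (L^n * \<epsilon> + norm d + D)" using nq he eta by (intro mult_left_mono) auto
      then show ?thesis using l1 by simp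
    qed
    have e2: "blinfun_apply (f' (X0,L0)) (e, \<Delta>) = A e + blinfun_apply (f' (X0,L0)) (0, \<Delta>)"
    proof -
      have "(e, \<Delta>) = (e, 0) + (0, \<Delta>)" by simp
      then have "blinfun_apply (f' (X0,L0)) (e, \<Delta>) = blinfun_apply (f' (X0,L0)) (e, 0) + blinfun_apply (f' (X0,L0)) (0, \<Delta>)"
        by (metis blinfun.add_right)
      then show ?thesis unfolding A_def Dx_def by simp
    qed
    have e3: "norm (blinfun_apply (f' (X0,L0)) (0, \<Delta>)) \<le> M * D"
    proof -
      have "norm (blinfun_apply (f' (X0,L0)) (0, \<Delta>)) \<le> norm (f' (X0,L0)) * norm \<Delta>"
        using norm_blinfun[of "f' (X0,L0)" "(0, \<Delta>)"] by (simp add: norm_Pair)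
      also have "\<dots> \<le> M * D" using Mb hD M by (intro mult_mono) auto
      finally show ?thesis .
    qed
    have dec: "xs (Suc k) - X0 - (A ^^ Suc k) e0
        = (xs (Suc k) - X0 - blinfun_apply (f' (X0,L0)) (e, \<Delta>)) + blinfun_apply (f' (X0,L0)) (0, \<Delta>) + A d"
    proof -
      have "(A ^^ Suc k) e0 = A ((A ^^ k) e0)" by simp
      moreover have "A d = A e - A ((A ^^ k) e0)" unfolding d_def by (rule A.diff)
      moreover have "xs (Suc k) - X0 = e + (xs (Suc k) - xs k)" unfolding e_def by simp
      ultimately show ?thesis unfolding e2 by (simp add: algebra_simps)
    qed
    have "norm (xs (Suc k) - X0 - (A ^^ Suc k) e0)
        \<le> norm (xs (Suc k) - X0 - blinfun_apply (f' (X0,L0)) (e, \<Delta>)) + norm (blinfun_apply (f' (X0,L0)) (0, \<Delta>)) + norm (A d)"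
      unfolding dec by (intro order_trans[OF norm_triangle_ineq] add_right_mono norm_triangle_ineq)
    also have "\<dots> \<le> \<eta> * (L^n * \<epsilon> + norm d + D) + M * D + M * norm d"
      using l1' e3 Ab[of d] by linarith
    also have "\<dots> = \<gamma> + (\<eta> + M) * norm d" unfolding \<gamma>_def by (simp add: algebra_simps)
    also have "\<dots> \<le> \<gamma> + (2*L) * (real k * (2*L)^k * \<gamma>)"
    proof -
      have "(\<eta> + M) * norm d \<le> (2*L) * norm d" using eta L1 unfolding L_def by (intro mult_right_mono) auto
      also have "\<dots> \<le> (2*L) * (real k * (2*L)^k * \<gamma>)" using IH L1 by (intro mult_left_mono) auto
      finally show ?thesis by simp
    qed
    also have "\<dots> = \<gamma> + real k * (2*L)^Suc k * \<gamma>" by (simp add: algebra_simps)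
    also have "\<dots> \<le> (2*L)^Suc k * \<gamma> + real k * (2*L)^Suc k * \<gamma>"
    proof -
      have "1 \<le> (2*L)^Suc k" using L1 by (intro one_le_power) simp
      then have "1 * \<gamma> \<le> (2*L)^Suc k * \<gamma>" using g0 by (intro mult_right_mono) auto
      then show ?thesis by simp
    qed
    also have "\<dots> = real (Suc k) * (2*L)^Suc k * \<gamma>" by (simp add: algebra_simps)
    finally show ?case unfolding d_def e_def .
  qed
  show ?thesis using claim[of n] unfolding A_def e0_def L_def \<gamma>_def by simp
qed

lemma lin_aux: "0 < e \<Longrightarrow> a < d/4 \<Longrightarrow> e \<le> a \<Longrightarrow> g \<le> e/4 + e/4 \<Longrightarrow> D \<le> e/4 \<Longrightarrow> a + g + D < (d::real)"
  by linarith

theorem mainTheorem13: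
  fixes f :: "real^'l \<Rightarrow> real^'m \<Rightarrow> real^'l"
    and f' :: "(real^'l) \<times> (real^'m) \<Rightarrow> (((real^'l) \<times> (real^'m)) \<Rightarrow>\<^sub>L (real^'l))"
    and Lam Lam' :: "real \<Rightarrow> real^'m"
    and lm lp :: "real^'m"
    and X :: "real \<Rightarrow> real^'l"
    and N :: nat
  assumes "C1_field f f'"
    and "parameter_shift Lam Lam' lm lp"
    and "stable_path f f' Lam lm lp X"
    and "\<forall>s. \<forall>n\<ge>N. onorm ((Dx f' (X s) (Lam s)) ^^ n) < 1/4"
  shows "\<forall>\<^sub>F \<epsilon> in at_right 0. \<forall>\<^sub>F r in at_right 0.
           \<forall>n\<in>{N..N*(N+1)}. (F_map f Lam r ^^ n) ` nbhd_path X \<epsilon> \<subseteq> nbhd_path X \<epsilon>"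
proof (cases "N = 0")
  case True
  then show ?thesis by simp
next
  case False
  then have N1: "N \<ge> 1" by simp
  note C1 = assms(1)
  have dL: "\<And>s. (Lam has_vector_derivative Lam' s) (at s)" and Llp: "(Lam \<longlongrightarrow> lp) at_top"
    and Llm: "(Lam \<longlongrightarrow> lm) at_bot"
    using assms(2) unfolding parameter_shift_def by auto
  have fx: "\<And>s. f (X s) (Lam s) = X s" and conn: "connected {(s, X s) | s. True}"
    and "\<exists>Xm Xp. (X \<longlongrightarrow> Xm) at_bot \<and> (X \<longlongrightarrow> Xp) at_top"
    using assms(3) unfolding stable_path_def by auto
  then obtain Xm Xp where Xm: "(X \<longlongrightarrow> Xm) at_bot" and Xp: "(X \<longlongrightarrow> Xp) at_top" by blast
  have on: "\<And>s n. n \<ge> N \<Longrightarrow> onorm ((Dx f' (X s) (Lam s)) ^^ n) < 1/4" using assms(4) by blast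
  have cL: "continuous_on UNIV Lam"
    by (rule continuous_at_imp_continuous_on) (use dL has_vector_derivative_continuous in blast)
  have cX: "continuous_on UNIV X"
    by (rule X_cont[OF C1 fx conn cL N1 on]) simp
  have uX: "uniformly_continuous_on UNIV X" by (rule lim_ucont[OF cX Xp Xm])
  have uL: "uniformly_continuous_on UNIV Lam" by (rule lim_ucont[OF cL Llp Llm])
  obtain R1 where R1: "\<And>s. norm (X s) \<le> R1"
    using lim_bounded[OF cX Xp Xm] unfolding bounded_iff by blast
  obtain R2 where R2: "\<And>s. norm (Lam s) \<le> R2"
    using lim_bounded[OF cL Llp Llm] unfolding bounded_iff by blast
  define R where "R = R1 + R2"
  have inR: "(X s, Lam s) \<in> cball 0 R" for s
    using norm_Pair_le[of "X s" "Lam s"] R1[of s] R2[of s] unfolding R_def by simp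
  have cf: "continuous_on UNIV f'" using C1 unfolding C1_field_def by auto
  have "bounded (f' ` cball 0 R)"
    by (rule compact_imp_bounded, rule compact_continuous_image[OF continuous_on_subset[OF cf] compact_cball]) simp
  then obtain M1 where M1: "\<And>q. q \<in> cball 0 R \<Longrightarrow> norm (f' q) \<le> M1" unfolding bounded_iff by blast
  define M where "M = max M1 0"
  have M: "M \<ge> 0" unfolding M_def by simp
  have Mb: "norm (f' (X s, Lam s)) \<le> M" for s using M1[OF inR[of s]] unfolding M_def by simp
  define L where "L = M + 1"
  have L1: "L \<ge> 1" unfolding L_def using M by simp
  have each: "\<forall>\<^sub>F \<epsilon> in at_right 0. \<forall>\<^sub>F r in at_right 0.
           (F_map f Lam r ^^ n) ` nbhd_path X \<epsilon> \<subseteq> nbhd_path X \<epsilon>" if nS: "n \<in> {N..N*(N+1)}" for n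
  proof -
    have nN: "n \<ge> N" and n1: "n \<ge> 1" using nS N1 by auto
    define P where "P = real n * (2*L)^n"
    have P0: "P > 0" unfolding P_def using n1 L1 by simp
    have Ln1: "L^n \<ge> 1" using L1 by simp
    define \<eta> where "\<eta> = min 1 (1 / (4 * P * L^n))"
    have eta0: "\<eta> > 0" unfolding \<eta>_def using P0 Ln1 by simp
    have eta1: "\<eta> \<le> 1" unfolding \<eta>_def by simp
    have etaP: "P * \<eta> * L^n \<le> 1/4"
    proof -
      have "\<eta> \<le> 1 / (4 * P * L^n)" unfolding \<eta>_def by simp
      then have "P * L^n * \<eta> \<le> P * L^n * (1 / (4 * P * L^n))" using P0 Ln1 by (intro mult_left_mono) auto
      also have "\<dots> = 1/4" using P0 Ln1 L1 by (simp add: field_simps)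
      finally show ?thesis by (simp add: ac_simps)
    qed
    obtain \<delta> where \<delta>: "\<delta> > 0" and lin: "\<And>p q. p \<in> cball 0 R \<Longrightarrow> norm (q - p) < \<delta> \<Longrightarrow>
       norm (f (fst q) (snd q) - f (fst p) (snd p) - blinfun_apply (f' p) (q - p)) \<le> \<eta> * norm (q - p)"
      using LIN[OF C1 eta0, of R] by blast
    show ?thesis
    proof (rule eventually_at_right_field[THEN iffD2], intro exI[of _ "\<delta> / (4 * L^n)"] conjI allI impI)
      show "(0::real) < \<delta> / (4 * L^n)" using \<delta> Ln1 by simp
      fix \<epsilon> :: real assume e0: "0 < \<epsilon>" and eb: "\<epsilon> < \<delta> / (4 * L^n)"
      have eL: "L^n * \<epsilon> < \<delta>/4" using eb Ln1 by (simp add: field_simps)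
      have eL2: "\<epsilon> \<le> L^n * \<epsilon>" using Ln1 e0 by simp
      define D where "D = \<epsilon> / (4 * (P*M + P + 1))"
      have pm: "P*M \<ge> 0" using P0 M by simp
      have pm1: "P*M + P + 1 > 0" using pm P0 by linarith
      have D0: "D > 0" unfolding D_def using e0 pm1 by simp
      have Deq: "(P*M + P + 1) * D = \<epsilon>/4"
      proof -
        have gen: "Q * (\<epsilon> / (4*Q)) = \<epsilon>/4" if "Q > 0" for Q :: real using that by simp
        show ?thesis unfolding D_def by (rule gen[OF pm1])
      qed
      obtain \<rho>1 where \<rho>1: "\<rho>1 > 0" "\<And>x x'. dist x' x < \<rho>1 \<Longrightarrow> dist (Lam x') (Lam x) < D"
        using uL D0 unfolding uniformly_continuous_on_def by (metis UNIV_I)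
      obtain \<rho>2 where \<rho>2: "\<rho>2 > 0" "\<And>x x'. dist x' x < \<rho>2 \<Longrightarrow> dist (X x') (X x) < \<epsilon>/4"
        using uX e0 unfolding uniformly_continuous_on_def by (metis UNIV_I zero_less_divide_iff zero_less_numeral)
      show "\<forall>\<^sub>F r in at_right 0. (F_map f Lam r ^^ n) ` nbhd_path X \<epsilon> \<subseteq> nbhd_path X \<epsilon>"
      proof (rule eventually_at_right_field[THEN iffD2], intro exI[of _ "min \<rho>1 \<rho>2 / (real n + 1)"] conjI allI impI)
        show "(0::real) < min \<rho>1 \<rho>2 / (real n + 1)" using \<rho>1 \<rho>2 by simp
        fix r :: real assume r0: "0 < r" and rb: "r < min \<rho>1 \<rho>2 / (real n + 1)"
        have rk: "real k * r < min \<rho>1 \<rho>2" if "k \<le> n" for k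
        proof -
          have "real k * r \<le> real n * r" using that r0 by (simp add: mult_right_mono)
          also have "\<dots> < (real n + 1) * r" using r0 by simp
          also have "\<dots> < min \<rho>1 \<rho>2" using rb by (simp add: field_simps)
          finally show ?thesis .
        qed
        show "(F_map f Lam r ^^ n) ` nbhd_path X \<epsilon> \<subseteq> nbhd_path X \<epsilon>"
        proof
          fix z assume "z \<in> (F_map f Lam r ^^ n) ` nbhd_path X \<epsilon>"
          then obtain s x where z: "z = (F_map f Lam r ^^ n) (s, x)" and sx: "norm (x - X s) \<le> \<epsilon>"
            unfolding nbhd_path_def by auto
          have z2: "z = (s + real n * r, trj f Lam r s x n)" unfolding z F_pow ..
          define A where "A = Dx f' (X s) (Lam s)"
          define \<gamma> where "\<gamma> = M*D + \<eta>*((M+1)^n*\<epsilon> + D)"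
          have lb: "norm (Lam (s + real k * r) - Lam s) \<le> D" if "k < n" for k
            using \<rho>1(2)[of "s + real k * r" s] rk[of k] that r0 by (simp add: dist_norm)
          have Pg: "P * \<gamma> = P * M * D + (P * \<eta> * L^n) * \<epsilon> + P * \<eta> * D"
            unfolding \<gamma>_def L_def by (simp add: algebra_simps)
          have t1: "(P * \<eta> * L^n) * \<epsilon> \<le> \<epsilon>/4" using mult_right_mono[OF etaP, of \<epsilon>] e0 by simp
          have t2: "P * \<eta> * D \<le> P * D" using P0 D0 eta1 by simp
          have t3: "P * M * D + P * D + D = \<epsilon>/4" using Deq by (simp add: algebra_simps)
          have Pg2: "P * \<gamma> \<le> \<epsilon>/4 + \<epsilon>/4" using Pg t1 t2 t3 D0 by linarith
          have pre: "(M+1)^n * \<epsilon> + real n * (2*(M+1))^n * (M*D + \<eta>*((M+1)^n*\<epsilon> + D)) + D < \<delta>"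
          proof -
            have "(M+1)^n * \<epsilon> + real n * (2*(M+1))^n * (M*D + \<eta>*((M+1)^n*\<epsilon> + D)) + D
                = L^n * \<epsilon> + P * \<gamma> + D" unfolding P_def \<gamma>_def L_def by simp
            also have "\<dots> < \<delta>"
            proof -
              have "P * M * D \<ge> 0" "P * D \<ge> 0" using P0 M D0 by simp_all
              then have "D \<le> \<epsilon>/4" using t3 by linarith
              then show ?thesis using lin_aux[OF e0 eL eL2 Pg2] by blast
            qed
            finally show ?thesis .
          qed
          have est: "norm (trj f Lam r s x n - X s - (A ^^ n) (x - X s)) \<le> P * \<gamma>"
            unfolding A_def P_def \<gamma>_def L_def
          proof (rule EST[where lams = "\<lambda>k. Lam (s + real k * r)" and \<delta> = \<delta>])
            show "f (X s) (Lam s) = X s" by (rule fx)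
            show "norm (f' (X s, Lam s)) \<le> M" by (rule Mb)
            show "M \<ge> 0" by (rule M)
            fix q :: "(real^'l) \<times> (real^'m)" assume "norm (q - (X s, Lam s)) < \<delta>"
            then show "norm (f (fst q) (snd q) - f (X s) (Lam s) - blinfun_apply (f' (X s, Lam s)) (q - (X s, Lam s))) \<le> \<eta> * norm (q - (X s, Lam s))"
              using lin[OF inR[of s]] by simp
          next
            show "0 \<le> \<eta>" "\<eta> \<le> 1" using eta0 eta1 by auto
            show "trj f Lam r s x 0 = x" by simp
            show "norm (x - X s) \<le> \<epsilon>" by (rule sx)
            show "\<And>k. k < n \<Longrightarrow> trj f Lam r s x (Suc k) = f (trj f Lam r s x k) (Lam (s + real k * r))" by simp
            show "\<And>k. k < n \<Longrightarrow> norm (Lam (s + real k * r) - Lam s) \<le> D" by (rule lb)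
            show "D \<ge> 0" "\<epsilon> \<ge> 0" using D0 e0 by auto
            show "(M+1)^n * \<epsilon> + real n * (2*(M+1))^n * (M*D + \<eta>*((M+1)^n*\<epsilon> + D)) + D < \<delta>" by (rule pre)
          qed
          have an: "norm ((A ^^ n) (x - X s)) \<le> \<epsilon>/4"
          proof -
            have "norm ((A ^^ n) (x - X s)) \<le> onorm (A ^^ n) * norm (x - X s)"
              using onorm[OF bl_pow[OF Dx_bl]] unfolding A_def by blast
            also have "\<dots> \<le> 1/4 * \<epsilon>" using on[OF nN, of s] sx unfolding A_def
              by (intro mult_mono) (auto intro: onorm_pos_le bl_pow Dx_bl)
            finally show ?thesis by simp
          qed
          have xd: "norm (X (s + real n * r) - X s) < \<epsilon>/4"
            using \<rho>2(2)[of "s + real n * r" s] rk[of n] r0 by (simp add: dist_norm)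
          have "norm (trj f Lam r s x n - X (s + real n * r))
              = norm ((trj f Lam r s x n - X s - (A ^^ n) (x - X s)) + (A ^^ n) (x - X s) - (X (s + real n * r) - X s))"
            by (rule arg_cong[where f=norm]) simp
          then have "norm (trj f Lam r s x n - X (s + real n * r))
              \<le> norm (trj f Lam r s x n - X s - (A ^^ n) (x - X s)) + norm ((A ^^ n) (x - X s)) + norm (X (s + real n * r) - X s)"
            using norm_triangle_ineq4[of "(trj f Lam r s x n - X s - (A ^^ n) (x - X s)) + (A ^^ n) (x - X s)" "X (s + real n * r) - X s"]
              norm_triangle_ineq[of "trj f Lam r s x n - X s - (A ^^ n) (x - X s)" "(A ^^ n) (x - X s)"]
            by linarith
          then have "norm (trj f Lam r s x n - X (s + real n * r)) \<le> \<epsilon>"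
            using est Pg2 an xd by linarith
          then show "z \<in> nbhd_path X \<epsilon>" unfolding z2 nbhd_path_def by simp
        qed
      qed
    qed
  qed
  have "\<forall>\<^sub>F \<epsilon> in at_right 0. \<forall>n\<in>{N..N*(N+1)}. \<forall>\<^sub>F r in at_right 0.
           (F_map f Lam r ^^ n) ` nbhd_path X \<epsilon> \<subseteq> nbhd_path X \<epsilon>"
    by (rule eventually_ball_finite) (use each in auto)
  then show ?thesis
    by (rule eventually_mono) (rule eventually_ball_finite, auto)
qed

end
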